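(* Let $S=\mathbb{Z}[x_0,\dots,x_d]$, fix a prime $p>0$, and let $f(\boldsymbol{x})=g(\boldsymbol{x})+p\,h(\boldsymbol{x})\in S$, where for some fixed integer $m<d$ one has $g(\boldsymbol{x})\in(x_0,\dots,x_m)S$ and $h(\boldsymbol{x})$ is a polynomial in $x_{m+1},\dots,x_d$ only. Set $R=S/(f(\boldsymbol{x}))$. Let $\Lambda_p$ be the ring endomorphism of $P_S=\mathbb{Z}[\boldsymbol{x},\boldsymbol{y}]$ with $\Lambda_p(x_i)=x_i^p$ and $\Lambda_p(y_i-x_i)=(y_i-x_i)^p$, and $\varphi_p(u)=(\Lambda_p(u)-u^p)/p$ for $u\in P_S$. If the local cohomology element \[ \left[\frac{\varphi_p(g(\boldsymbol{x}))}{(x_0\cdots x_m)^p}\right]\in H^{m+1}_{(x_0,\dots,x_m)}(R/pR) \] is nonzero, then so is \[ \left[\frac{\varphi_p\big(f(\boldsymbol{y})-f(\boldsymbol{x})\big)}{\prod_{i=0}^d(y_i-x_i)^p}\right]\in H^{d+1}_{\Delta_R}(P_R/pP_R). \]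
   Context: $P_R=R\otimes_{\mathbb{Z}}R$ is identified with $\mathbb{Z}[\boldsymbol{x},\boldsymbol{y}]/(f(\boldsymbol{x}),f(\boldsymbol{y}))$ ($x_i=x_i\otimes 1$, $y_i=1\otimes x_i$), and $\Delta_R$ is the ideal generated by $y_i-x_i$, $0\le i\le d$. Local cohomology classes are Čech classes of the images of the indicated numerators. *)

theory Defs
  imports Main "HOL-Library.Poly_Mapping" "HOL-Computational_Algebra.Primes"
begin

text \<open>Multivariate integer polynomials with variables indexed by type 'v:
  maps from monomials (exponent vectors, 'v =>0 nat) to integer coefficients.\<close>
type_synonym 'v mpoly = "('v \<Rightarrow>\<^sub>0 nat) \<Rightarrow>\<^sub>0 int"

definition Var :: "'v \<Rightarrow> 'v mpoly" where
  "Var v = Poly_Mapping.single (Poly_Mapping.single v 1) 1"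

definition vars :: "'v mpoly \<Rightarrow> 'v set" where
  "vars q = \<Union> (Poly_Mapping.keys ` Poly_Mapping.keys q)"

definition subst :: "('v \<Rightarrow> 'w mpoly) \<Rightarrow> 'v mpoly \<Rightarrow> 'w mpoly" where
  "subst \<sigma> q = (\<Sum>mo\<in>Poly_Mapping.keys q.
      of_int (Poly_Mapping.lookup q mo) * (\<Prod>v\<in>Poly_Mapping.keys mo. \<sigma> v ^ Poly_Mapping.lookup mo v))"

text \<open>P_S = Z[x,y]: variables Inl i = x_i, Inr i = y_i.\<close>
abbreviation xv :: "nat \<Rightarrow> (nat + nat) mpoly" where "xv i \<equiv> Var (Inl i)"
abbreviation yv :: "nat \<Rightarrow> (nat + nat) mpoly" where "yv i \<equiv> Var (Inr i)"

text \<open>Lambda_p: x_i |-> x_i^p, y_i |-> x_i^p + (y_i - x_i)^p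
  (so that y_i - x_i |-> (y_i - x_i)^p).\<close>
definition Lambda :: "nat \<Rightarrow> (nat + nat) mpoly \<Rightarrow> (nat + nat) mpoly" where
  "Lambda p = subst (\<lambda>v. case v of Inl i \<Rightarrow> xv i ^ p
                                 | Inr i \<Rightarrow> xv i ^ p + (yv i - xv i) ^ p)"

text \<open>phi_p(u) = (Lambda_p(u) - u^p)/p (exact division of integer coefficients).\<close>
definition phi :: "nat \<Rightarrow> (nat + nat) mpoly \<Rightarrow> (nat + nat) mpoly" where
  "phi p u = Poly_Mapping.map (\<lambda>c. c div int p) (Lambda p u - u ^ p)"

definition in_ideal :: "'v set \<Rightarrow> 'v mpoly set \<Rightarrow> 'v mpoly \<Rightarrow> bool" where
  "in_ideal V G q \<longleftrightarrow> (\<exists>c. (\<forall>g\<in>G. vars (c g) \<subseteq> V) \<and> q = (\<Sum>g\<in>G. c g * g))"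

text \<open>Vanishing of the Cech class [r/(a_1...a_n)^k] in the top local cohomology
  H^n_{(a_1..a_n)}(M), M = Z[V]/(G), computed by the Cech complex:
  H^n = M_A / sum_i image(M_{A/a_i}) with A = a_1...a_n.  The class is zero iff
  r/A^k = sum_i m_i/(A/a_i)^s = sum_i m_i a_i^s / A^s in M_A for some s and m_i,
  i.e. (equality in the localisation M_A) iff
  A^t (r A^s - A^k sum_i m_i a_i^s) = 0 in M for some t.\<close>
definition cech_top_class_zero ::
  "'v set \<Rightarrow> 'v mpoly set \<Rightarrow> 'v mpoly list \<Rightarrow> nat \<Rightarrow> 'v mpoly \<Rightarrow> bool" where
  "cech_top_class_zero V G as k r \<longleftrightarrow>
     (let A = prod_list as; n = length as in
      \<exists>s t ms. (\<forall>i<n. vars (ms i) \<subseteq> V) \<and>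
        in_ideal V G (A ^ t * (r * A ^ s - A ^ k * (\<Sum>i<n. ms i * (as ! i) ^ s))))"

end

theory Submission
  imports Defs
begin


lemma lookup_ofint_mult: "Poly_Mapping.lookup ((of_int c :: 'a::comm_monoid_add \<Rightarrow>\<^sub>0 int) * P) k = c * Poly_Mapping.lookup P k"
proof -
  have "(of_int c :: 'a \<Rightarrow>\<^sub>0 int) = Poly_Mapping.single 0 c" by (metis single_of_int of_int_eq_id id_apply)
  then have "(of_int c :: 'a \<Rightarrow>\<^sub>0 int) * P = Poly_Mapping.map ((*) c) P"
    by (simp add: mult_map_scale_conv_mult)
  then show ?thesis by (simp add: Poly_Mapping.map.rep_eq when_def)
qed

lemma frag_cmul_eq: "frag_cmul c P = (of_int c :: 'a::comm_monoid_add \<Rightarrow>\<^sub>0 int) * P"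
  by (rule poly_mapping_eqI) (simp add: lookup_ofint_mult)

definition mval :: "('v \<Rightarrow> 'w mpoly) \<Rightarrow> ('v \<Rightarrow>\<^sub>0 nat) \<Rightarrow> 'w mpoly" where
  "mval \<sigma> mo = (\<Prod>v\<in>Poly_Mapping.keys mo. \<sigma> v ^ Poly_Mapping.lookup mo v)"

lemma subst_frag: "subst \<sigma> q = frag_extend (mval \<sigma>) q"
  unfolding subst_def frag_extend_def mval_def by (simp add: frag_cmul_eq)

lemma subst_add: "subst \<sigma> (a + b) = subst \<sigma> a + subst \<sigma> b"
  by (simp add: subst_frag frag_extend_add)
lemma subst_diff: "subst \<sigma> (a - b) = subst \<sigma> a - subst \<sigma> b"
  by (simp add: subst_frag frag_extend_diff)
lemma subst_minus: "subst \<sigma> (- a) = - subst \<sigma> a"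
  by (simp add: subst_frag frag_extend_minus)
lemma subst_0: "subst \<sigma> 0 = 0"
  by (simp add: subst_frag)
lemma subst_frag_of: "subst \<sigma> (frag_of mo) = mval \<sigma> mo"
  by (simp add: subst_frag)
lemma subst_cmul: "subst \<sigma> (frag_cmul c x) = frag_cmul c (subst \<sigma> x)"
  by (simp add: subst_frag frag_extend_cmul)

lemma mono_superset:
  assumes "finite S" "Poly_Mapping.keys mo \<subseteq> S"
  shows "mval \<sigma> mo = (\<Prod>v\<in>S. \<sigma> v ^ Poly_Mapping.lookup mo v)"
  unfolding mval_def
  by (rule prod.mono_neutral_left) (use assms in \<open>auto simp: in_keys_iff\<close>)

lemma mono_add: "mval \<sigma> (a + b) = mval \<sigma> a * mval \<sigma> b"
proof -
  let ?S = "Poly_Mapping.keys a \<union> Poly_Mapping.keys b"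
  have "mval \<sigma> (a + b) = (\<Prod>v\<in>?S. \<sigma> v ^ Poly_Mapping.lookup (a+b) v)"
    by (rule mono_superset) (auto simp: keys_add)
  also have "\<dots> = (\<Prod>v\<in>?S. \<sigma> v ^ Poly_Mapping.lookup a v) * (\<Prod>v\<in>?S. \<sigma> v ^ Poly_Mapping.lookup b v)"
    by (simp add: lookup_add power_add prod.distrib)
  also have "\<dots> = mval \<sigma> a * mval \<sigma> b"
    using mono_superset[of ?S a \<sigma>] mono_superset[of ?S b \<sigma>] by auto
  finally show ?thesis .
qed

lemma mono_0: "mval \<sigma> 0 = 1"
  by (simp add: mval_def)

lemma subst_mult: "subst \<sigma> (a * b) = subst \<sigma> a * subst \<sigma> b"
proof -
  have "\<forall>b. subst \<sigma> (a * b) = subst \<sigma> a * subst \<sigma> b"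
  using subset_UNIV proof (induction a rule: frag_induction)
    case zero then show ?case by (simp add: subst_0)
  next
    case (one x)
    show ?case
    proof
      fix b show "subst \<sigma> (frag_of x * b) = subst \<sigma> (frag_of x) * subst \<sigma> b"
      using subset_UNIV proof (induction b rule: frag_induction)
        case zero then show ?case by (simp add: subst_0)
      next
        case (one y) then show ?case by (simp add: mult_single subst_frag_of mono_add)
      next
        case (diff a b) then show ?case by (simp add: right_diff_distrib subst_diff)
      qed
    qed
  next
    case (diff a1 a2) then show ?case by (simp add: left_diff_distrib subst_diff)
  qed
  then show ?thesis by blast
qed

lemma subst_one: "subst \<sigma> 1 = 1"
proof -
  show ?thesis using subst_frag_of[of \<sigma> 0] mono_0[of \<sigma>] by simp
qed

lemma subst_Var: "subst \<sigma> (Var v) = \<sigma> v"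
  unfolding Var_def by (simp add: subst_frag_of mval_def)

lemma subst_of_int: "subst \<sigma> (of_int c) = of_int c"
proof -
  have "subst \<sigma> (frag_cmul c 1) = frag_cmul c 1" by (simp add: subst_cmul subst_one)
  then show ?thesis by (simp add: frag_cmul_eq)
qed

lemma subst_of_nat: "subst \<sigma> (of_nat n) = of_nat n"
  using subst_of_int[of \<sigma> "int n"] by simp

lemma subst_power: "subst \<sigma> (a ^ n) = subst \<sigma> a ^ n"
  by (induction n) (simp_all add: subst_one subst_mult)

lemma subst_prod: "subst \<sigma> (\<Prod>i\<in>I. f i) = (\<Prod>i\<in>I. subst \<sigma> (f i))"
  by (induction I rule: infinite_finite_induct) (simp_all add: subst_one subst_mult)

lemma subst_sum: "subst \<sigma> (\<Sum>i\<in>I. f i) = (\<Sum>i\<in>I. subst \<sigma> (f i))"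
  by (induction I rule: infinite_finite_induct) (simp_all add: subst_0 subst_add)

lemma subst_comp: "subst \<tau> (subst \<sigma> q) = subst (\<lambda>v. subst \<tau> (\<sigma> v)) q"
using subset_UNIV proof (induction q rule: frag_induction)
  case (one x) then show ?case by (simp add: subst_frag_of mval_def subst_prod subst_power)
qed (simp_all add: subst_0 subst_diff)

lemma Var_power: "Var v ^ n = frag_of (Poly_Mapping.single v n)"
  by (induction n) (simp_all add: Var_def mult_single single_add[symmetric] add.commute)

lemma prod_frag_of: "(\<Prod>i\<in>I. frag_of (a i)) = frag_of (\<Sum>i\<in>I. a i)"
  by (induction I rule: infinite_finite_induct) (simp_all add: mult_single)

lemma sum_single_keys: "(\<Sum>v\<in>Poly_Mapping.keys mo. Poly_Mapping.single v (Poly_Mapping.lookup mo v)) = mo"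
  by (rule poly_mapping_eqI) (simp add: lookup_sum lookup_single when_def in_keys_iff)

lemma mono_Var: "mval Var mo = frag_of mo"
  unfolding mval_def by (simp add: Var_power prod_frag_of sum_single_keys)

lemma subst_Var_id: "subst Var q = q"
using subset_UNIV proof (induction q rule: frag_induction)
  case (one x) then show ?case by (simp add: subst_frag_of mono_Var)
qed (simp_all add: subst_0 subst_diff)

lemma subst_cong:
  assumes "\<And>v. v \<in> vars q \<Longrightarrow> \<sigma> v = \<tau> v"
  shows "subst \<sigma> q = subst \<tau> q"
  unfolding subst_frag
proof (rule frag_extend_eq)
  fix mo assume "mo \<in> Poly_Mapping.keys q"
  then have "Poly_Mapping.keys mo \<subseteq> vars q" by (auto simp: vars_def)
  then show "mval \<sigma> mo = mval \<tau> mo" unfolding mval_def using assms by (auto intro!: prod.cong)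
qed

lemma vars_mult: "vars (a * b) \<subseteq> vars a \<union> vars b"
proof
  fix v assume "v \<in> vars (a * b)"
  then obtain mo where mo: "mo \<in> Poly_Mapping.keys (a*b)" "v \<in> Poly_Mapping.keys mo" unfolding vars_def by blast
  have "mo \<in> {x + y | x y. x \<in> Poly_Mapping.keys a \<and> y \<in> Poly_Mapping.keys b}"
    using keys_mult[of a b] mo(1) by blast
  then obtain x y where xy: "mo = x + y" "x \<in> Poly_Mapping.keys a" "y \<in> Poly_Mapping.keys b"
    by blast
  have "v \<in> Poly_Mapping.keys x \<or> v \<in> Poly_Mapping.keys y"
    using keys_add[of x y] mo(2) xy(1) by blast
  then show "v \<in> vars a \<union> vars b" using xy unfolding vars_def by blast
qed

lemma vars_add: "vars (a + b) \<subseteq> vars a \<union> vars b"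
  using keys_add[of a b] by (auto simp: vars_def)

lemma vars_one: "vars (1::'a mpoly) = {}"
  by (simp add: vars_def)

lemma vars_power: "vars a \<subseteq> V \<Longrightarrow> vars (a ^ n) \<subseteq> V"
proof (induction n)
  case (Suc n) then show ?case using vars_mult[of a "a^n"] by auto
qed (simp add: vars_one)

lemma vars_prod: "(\<And>i. i \<in> I \<Longrightarrow> vars (f i) \<subseteq> V) \<Longrightarrow> vars (\<Prod>i\<in>I. f i) \<subseteq> V"
proof (induction I rule: infinite_finite_induct)
  case (insert x F) then show ?case using vars_mult[of "f x" "prod f F"] by auto
qed (auto simp: vars_one)

lemma vars_subst:
  assumes "\<And>v. vars (\<sigma> v) \<subseteq> V"
  shows "vars (subst \<sigma> q) \<subseteq> V"
proof
  fix v assume "v \<in> vars (subst \<sigma> q)"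
  then obtain mo where mo: "mo \<in> Poly_Mapping.keys (subst \<sigma> q)" "v \<in> Poly_Mapping.keys mo" unfolding vars_def by blast
  have "mo \<in> (\<Union>x\<in>Poly_Mapping.keys q. Poly_Mapping.keys (mval \<sigma> x))"
    by (rule subsetD[OF keys_frag_extend]) (use mo(1) in \<open>simp add: subst_frag\<close>)
  then obtain x where "x \<in> Poly_Mapping.keys q" "mo \<in> Poly_Mapping.keys (mval \<sigma> x)"
    by blast
  moreover have "vars (mval \<sigma> x) \<subseteq> V" unfolding mval_def
    by (rule vars_prod) (rule vars_power, rule assms)
  ultimately show "v \<in> V" using mo(2) unfolding vars_def by blast
qed



definition cp :: "nat \<Rightarrow> 'a::comm_ring_1 \<Rightarrow> 'a \<Rightarrow> bool" where
  "cp p a b \<longleftrightarrow> (\<exists>c. a - b = of_nat p * c)"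

lemma cp_refl: "cp p a a" unfolding cp_def by (rule exI[of _ 0]) simp
lemma cp_sym: "cp p a b \<Longrightarrow> cp p b a"
  unfolding cp_def by (metis minus_diff_eq mult_minus_right)
lemma cp_trans: "cp p a b \<Longrightarrow> cp p b c \<Longrightarrow> cp p a c"
  unfolding cp_def by (metis (no_types, lifting) diff_add_cancel add_diff_cancel_left distrib_left add_diff_eq)
lemma cp_add: "cp p a b \<Longrightarrow> cp p c d \<Longrightarrow> cp p (a + c) (b + d)"
proof -
  assume "cp p a b" "cp p c d"
  then obtain e f where "a - b = of_nat p * e" "c - d = of_nat p * f" unfolding cp_def by blast
  then have "(a + c) - (b + d) = of_nat p * (e + f)" by (simp add: algebra_simps)
  then show ?thesis unfolding cp_def by blast
qed
lemma cp_diff: "cp p a b \<Longrightarrow> cp p c d \<Longrightarrow> cp p (a - c) (b - d)"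
proof -
  assume "cp p a b" "cp p c d"
  then obtain e f where "a - b = of_nat p * e" "c - d = of_nat p * f" unfolding cp_def by blast
  then have "(a - c) - (b - d) = of_nat p * (e - f)" by (simp add: algebra_simps)
  then show ?thesis unfolding cp_def by blast
qed
lemma cp_mult: "cp p a b \<Longrightarrow> cp p c d \<Longrightarrow> cp p (a * c) (b * d)"
proof -
  assume "cp p a b" "cp p c d"
  then obtain e f where e: "a = b + of_nat p * e" and f: "c = d + of_nat p * f" unfolding cp_def
    by (metis add.commute diff_add_cancel)
  have "(a * c) - (b * d) = of_nat p * (e * d + b * f + of_nat p * e * f)"
    unfolding e f by (simp add: algebra_simps)
  then show ?thesis unfolding cp_def by blast
qed
lemma cp_power: "cp p a b \<Longrightarrow> cp p (a ^ n) (b ^ n)"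
  by (induction n) (simp_all add: cp_refl cp_mult)
lemma cp_prod: "(\<And>i. i \<in> I \<Longrightarrow> cp p (f i) (g i)) \<Longrightarrow> cp p (\<Prod>i\<in>I. f i) (\<Prod>i\<in>I. g i)"
  by (induction I rule: infinite_finite_induct) (simp_all add: cp_refl cp_mult)

lemma freshman:
  fixes x y :: "'a::comm_ring_1"
  assumes "prime p"
  shows "cp p ((x + y) ^ p) (x ^ p + y ^ p)"
proof -
  have p2: "p \<ge> 2" using assms prime_ge_2_nat by blast
  define S where "S = (\<Sum>k\<in>{1..<p}. of_nat ((p choose k) div p) * x ^ k * y ^ (p - k))"
  have "(x + y) ^ p = (\<Sum>k\<le>p. of_nat (p choose k) * x ^ k * y ^ (p - k))"
    by (rule binomial_ring)
  also have "{..p} = insert 0 (insert p {1..<p})" using p2 by auto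
  also have "(\<Sum>k\<in>insert 0 (insert p {1..<p}). of_nat (p choose k) * x ^ k * y ^ (p - k))
     = y ^ p + (x ^ p + (\<Sum>k\<in>{1..<p}. of_nat (p choose k) * x ^ k * y ^ (p - k)))"
    using p2 by simp
  also have "(\<Sum>k\<in>{1..<p}. of_nat (p choose k) * x ^ k * y ^ (p - k)) = of_nat p * S"
    unfolding S_def sum_distrib_left
  proof (rule sum.cong)
    fix k assume "k \<in> {1..<p}"
    then have "p dvd (p choose k)" using dvd_choose_prime[of k p] assms by auto
    then have "(p choose k) = p * ((p choose k) div p)" by simp
    then have "(of_nat (p choose k) :: 'a) = of_nat p * of_nat ((p choose k) div p)"
      by (metis of_nat_mult)
    then show "of_nat (p choose k) * x ^ k * y ^ (p - k) = of_nat p * (of_nat ((p choose k) div p) * x ^ k * y ^ (p - k))"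
      by (simp add: mult.assoc)
  qed simp
  finally have e: "(x + y) ^ p = y ^ p + (x ^ p + of_nat p * S)" .
  have "(x + y) ^ p - (x ^ p + y ^ p) = of_nat p * S" unfolding e by simp
  then show ?thesis unfolding cp_def by blast
qed

lemma pow_swap: "((a::'a::comm_monoid_mult) ^ p) ^ e = (a ^ e) ^ p"
  by (simp add: power_mult[symmetric] mult.commute)

abbreviation Lv :: "nat \<Rightarrow> nat + nat \<Rightarrow> (nat + nat) mpoly" where
  "Lv p \<equiv> (\<lambda>v. case v of Inl i \<Rightarrow> xv i ^ p | Inr i \<Rightarrow> xv i ^ p + (yv i - xv i) ^ p)"

lemma cp_Lv: "prime p \<Longrightarrow> cp p (Lv p v) (Var v ^ p)"
proof (cases v)
  case (Inl i) then show ?thesis by (simp add: cp_refl)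
next
  case (Inr i)
  assume "prime p"
  have "cp p ((xv i + (yv i - xv i)) ^ p) (xv i ^ p + (yv i - xv i) ^ p)" by (rule freshman) fact
  then show ?thesis using Inr by (simp add: cp_sym)
qed

lemma frob: assumes "prime p" shows "cp p (Lambda p u) (u ^ p)"
proof -
  have p0: "p > 0" using assms prime_gt_0_nat by blast
  show ?thesis
  using subset_UNIV proof (induction u rule: frag_induction)
    case zero then show ?case using p0 by (simp add: Lambda_def subst_0 cp_refl zero_power)
  next
    case (one mo)
    have "Lambda p (frag_of mo) = (\<Prod>v\<in>Poly_Mapping.keys mo. Lv p v ^ Poly_Mapping.lookup mo v)"
      by (simp add: Lambda_def subst_frag_of mval_def)
    moreover have "cp p (\<Prod>v\<in>Poly_Mapping.keys mo. Lv p v ^ Poly_Mapping.lookup mo v)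
                        (\<Prod>v\<in>Poly_Mapping.keys mo. (Var v ^ p) ^ Poly_Mapping.lookup mo v)"
      by (intro cp_prod cp_power cp_Lv assms)
    moreover have "(\<Prod>v\<in>Poly_Mapping.keys mo. (Var v ^ p) ^ Poly_Mapping.lookup mo v) = frag_of mo ^ p"
    proof -
      have "(\<Prod>v\<in>Poly_Mapping.keys mo. (Var v ^ p) ^ Poly_Mapping.lookup mo v)
          = (\<Prod>v\<in>Poly_Mapping.keys mo. (Var v ^ Poly_Mapping.lookup mo v) ^ p)"
        by (simp add: pow_swap)
      also have "\<dots> = (\<Prod>v\<in>Poly_Mapping.keys mo. Var v ^ Poly_Mapping.lookup mo v) ^ p"
        by (simp add: prod_power_distrib)
      also have "\<dots> = frag_of mo ^ p" using mono_Var[of mo] unfolding mval_def by simp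
      finally show ?thesis .
    qed
    ultimately show ?case by simp
  next
    case (diff a b)
    have "cp p (Lambda p (a - b)) (a ^ p - b ^ p)"
      using diff by (simp add: Lambda_def subst_diff cp_diff)
    moreover have "cp p (a ^ p) ((a - b) ^ p + b ^ p)"
      using freshman[OF assms, of "a - b" b] by simp
    then have "cp p (a ^ p - b ^ p) ((a - b) ^ p)"
      using cp_diff[OF _ cp_refl[of p "b^p"]] by fastforce
    ultimately show ?case by (rule cp_trans)
  qed
qed



definition inl_only :: "(nat + nat \<Rightarrow>\<^sub>0 nat) \<Rightarrow> bool" where
  "inl_only mo \<longleftrightarrow> (\<forall>i. Poly_Mapping.lookup mo (Inr i) = 0)"

definition tmon :: "nat set \<Rightarrow> nat \<Rightarrow> (nat + nat \<Rightarrow>\<^sub>0 nat)" where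
  "tmon J K = (\<Sum>i\<in>J. Poly_Mapping.single (Inr i) K)"

lemma lookup_tmon: "finite J \<Longrightarrow> Poly_Mapping.lookup (tmon J K) v = (case v of Inl i \<Rightarrow> 0 | Inr i \<Rightarrow> if i \<in> J then K else 0)"
  unfolding tmon_def by (cases v) (auto simp: lookup_sum lookup_single when_def)

lemma tmon_add: "tmon J (a + b) = tmon J a + tmon J b"
  unfolding tmon_def by (simp add: single_add sum.distrib)

lemma tmon_0: "tmon J 0 = 0"
  unfolding tmon_def by simp

lemma fin_kap: "finite {mo. (if inl_only mo then Poly_Mapping.lookup q (mo + t) else 0) \<noteq> (0::int)}"
proof -
  have "{mo. (if inl_only mo then Poly_Mapping.lookup q (mo + t) else 0) \<noteq> 0} \<subseteq> (\<lambda>mo. mo + t) -` Poly_Mapping.keys q"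
    by (auto simp: in_keys_iff split: if_splits)
  moreover have "finite ((\<lambda>mo. mo + t) -` Poly_Mapping.keys q)"
    by (rule finite_vimageI) (auto simp: inj_on_def)
  ultimately show ?thesis by (rule finite_subset)
qed

definition kap :: "nat set \<Rightarrow> nat \<Rightarrow> (nat + nat) mpoly \<Rightarrow> (nat + nat) mpoly" where
  "kap J K q = Abs_poly_mapping (\<lambda>mo. if inl_only mo then Poly_Mapping.lookup q (mo + tmon J K) else 0)"

lemma lookup_kap: "Poly_Mapping.lookup (kap J K q) mo = (if inl_only mo then Poly_Mapping.lookup q (mo + tmon J K) else 0)"
  unfolding kap_def using fin_kap[of q "tmon J K"] by simp

lemma kap_diff: "kap J K (a - b) = kap J K a - kap J K b"
  by (rule poly_mapping_eqI) (simp add: lookup_kap lookup_minus)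
lemma kap_add: "kap J K (a + b) = kap J K a + kap J K b"
  by (rule poly_mapping_eqI) (simp add: lookup_kap lookup_add)
lemma kap_0: "kap J K 0 = 0"
  by (rule poly_mapping_eqI) (simp add: lookup_kap)
lemma kap_sum: "kap J K (\<Sum>i\<in>I. f i) = (\<Sum>i\<in>I. kap J K (f i))"
  by (induction I rule: infinite_finite_induct) (simp_all add: kap_0 kap_add)

lemma shiftA: "Poly_Mapping.lookup (frag_of a * q) (a + l) = Poly_Mapping.lookup q l"
  for a :: "nat + nat \<Rightarrow>\<^sub>0 nat"
  using subset_UNIV
proof (induction q rule: frag_induction)
  case zero then show ?case by simp
next
  case (one x) then show ?case by (auto simp: mult_single lookup_single when_def dest: add_left_imp_eq)
next
  case (diff a1 b1) then show ?case by (simp add: right_diff_distrib lookup_minus)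
qed

lemma shiftB: "(\<And>l. k \<noteq> a + l) \<Longrightarrow> Poly_Mapping.lookup (frag_of a * q) k = 0"
  for a :: "nat + nat \<Rightarrow>\<^sub>0 nat"
  using subset_UNIV
proof (induction q rule: frag_induction)
  case zero then show ?case by simp
next
  case (one x) then show ?case by (auto simp: mult_single lookup_single when_def)
next
  case (diff a1 b1) then show ?case by (simp add: right_diff_distrib lookup_minus)
qed

lemma lookup_pm_minus_nat: "Poly_Mapping.lookup (f - g) k = Poly_Mapping.lookup f k - Poly_Mapping.lookup g (k::'a) \<and> True"
  for f g :: "'a \<Rightarrow>\<^sub>0 nat"
  by (simp add: minus_poly_mapping.rep_eq)

lemma kap_frag_inl:
  assumes fin: "finite J" and a: "inl_only a"
  shows "kap J K (frag_of a * q) = frag_of a * kap J K q"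
proof (rule poly_mapping_eqI)
  fix mo
  show "Poly_Mapping.lookup (kap J K (frag_of a * q)) mo = Poly_Mapping.lookup (frag_of a * kap J K q) mo"
  proof (cases "inl_only mo")
    case True
    show ?thesis
    proof (cases "\<exists>l. mo = a + l")
      case True
      then obtain l where l: "mo = a + l" by blast
      have "inl_only l" using \<open>inl_only mo\<close> unfolding l inl_only_def by (simp add: lookup_add)
      have "Poly_Mapping.lookup (kap J K (frag_of a * q)) mo = Poly_Mapping.lookup (frag_of a * q) (a + (l + tmon J K))"
        using \<open>inl_only mo\<close> by (simp add: lookup_kap l add.assoc)
      also have "\<dots> = Poly_Mapping.lookup q (l + tmon J K)" by (rule shiftA)
      also have "\<dots> = Poly_Mapping.lookup (kap J K q) l" using \<open>inl_only l\<close> by (simp add: lookup_kap)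
      also have "\<dots> = Poly_Mapping.lookup (frag_of a * kap J K q) mo" unfolding l by (rule shiftA[symmetric])
      finally show ?thesis .
    next
      case False
      have "Poly_Mapping.lookup (frag_of a * q) (mo + tmon J K) = 0"
      proof (rule shiftB)
        fix l' show "mo + tmon J K \<noteq> a + l'"
        proof
          assume eq: "mo + tmon J K = a + l'"
          have "mo = a + (l' - tmon J K)"
          proof (rule poly_mapping_eqI)
            fix v
            have e: "Poly_Mapping.lookup mo v + Poly_Mapping.lookup (tmon J K) v = Poly_Mapping.lookup a v + Poly_Mapping.lookup l' v"
              using arg_cong[OF eq, of "\<lambda>f. Poly_Mapping.lookup f v"] by (simp add: lookup_add)
            show "Poly_Mapping.lookup mo v = Poly_Mapping.lookup (a + (l' - tmon J K)) v"
            proof (cases v)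
              case (Inl i) then show ?thesis using e by (simp add: lookup_add minus_poly_mapping.rep_eq lookup_tmon fin)
            next
              case (Inr i)
              then show ?thesis using e a \<open>inl_only mo\<close> unfolding inl_only_def
                by (simp add: lookup_add minus_poly_mapping.rep_eq)
            qed
          qed
          then show False using False by blast
        qed
      qed
      moreover have "Poly_Mapping.lookup (frag_of a * kap J K q) mo = 0"
        by (rule shiftB) (use False in blast)
      ultimately show ?thesis using True by (simp add: lookup_kap)
    qed
  next
    case False
    have "Poly_Mapping.lookup (frag_of a * kap J K q) mo = 0"
    proof (cases "\<exists>l. mo = a + l")
      case True
      then obtain l where l: "mo = a + l" by blast
      have "\<not> inl_only l" using False a unfolding l inl_only_def by (simp add: lookup_add)
      then show ?thesis unfolding l by (simp add: shiftA lookup_kap)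
    next
      case False then show ?thesis by (intro shiftB) blast
    qed
    then show ?thesis using False by (simp add: lookup_kap)
  qed
qed

lemma kap_mult_inl:
  assumes fin: "finite J" and G: "\<And>mo. mo \<in> Poly_Mapping.keys G \<Longrightarrow> inl_only mo"
  shows "kap J K (G * q) = G * kap J K q"
proof -
  have "Poly_Mapping.keys G \<subseteq> {mo. inl_only mo}" using G by blast
  then show ?thesis
  proof (induction G rule: frag_induction)
    case zero then show ?case by (simp add: kap_0)
  next
    case (one x) then show ?case using kap_frag_inl[OF fin] by simp
  next
    case (diff a b) then show ?case by (simp add: left_diff_distrib kap_diff)
  qed
qed

lemma kap_shift:
  assumes fin: "finite J" and "j \<le> K"
  shows "kap J K (frag_of (tmon J j) * q) = kap J (K - j) q"
proof (rule poly_mapping_eqI)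
  fix mo
  have t: "tmon J K = tmon J j + tmon J (K - j)" using assms(2) by (simp add: tmon_add[symmetric])
  show "Poly_Mapping.lookup (kap J K (frag_of (tmon J j) * q)) mo = Poly_Mapping.lookup (kap J (K - j) q) mo"
    unfolding lookup_kap t
    by (simp add: shiftA[of "tmon J j" q "mo + tmon J (K - j)", symmetric] add_ac)
qed

lemma kap_vanish:
  assumes fin: "finite J" and i: "i \<in> J" and big: "Poly_Mapping.lookup a (Inr i) > K"
  shows "kap J K (frag_of a * q) = 0"
proof (rule poly_mapping_eqI)
  fix mo
  have "Poly_Mapping.lookup (frag_of a * q) (mo + tmon J K) = 0" if "inl_only mo"
  proof (rule shiftB)
    fix l show "mo + tmon J K \<noteq> a + l"
    proof
      assume eq: "mo + tmon J K = a + l"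
      have "Poly_Mapping.lookup (mo + tmon J K) (Inr i) = K"
        using that fin i by (simp add: lookup_add lookup_tmon inl_only_def)
      moreover have "Poly_Mapping.lookup (a + l) (Inr i) \<ge> Poly_Mapping.lookup a (Inr i)"
        by (simp add: lookup_add)
      ultimately show False using eq big by simp
    qed
  qed
  then show "Poly_Mapping.lookup (kap J K (frag_of a * q)) mo = Poly_Mapping.lookup 0 mo"
    by (simp add: lookup_kap)
qed

definition eps :: "nat + nat \<Rightarrow> (nat + nat) mpoly" where
  "eps v = (case v of Inl i \<Rightarrow> xv i | Inr i \<Rightarrow> 0)"

lemma kap0_eps: "kap J 0 q = subst eps q"
  using subset_UNIV
proof (induction q rule: frag_induction)
  case zero then show ?case by (simp add: kap_0 subst_0)
next
  case (one mo)
  show ?case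
  proof (cases "inl_only mo")
    case True
    have "mval eps mo = mval Var mo" unfolding mval_def
    proof (rule prod.cong)
      fix v assume "v \<in> Poly_Mapping.keys mo"
      with True have "\<exists>i. v = Inl i" unfolding inl_only_def by (cases v) (auto simp: in_keys_iff)
      then show "eps v ^ Poly_Mapping.lookup mo v = Var v ^ Poly_Mapping.lookup mo v" by (auto simp: eps_def)
    qed simp
    moreover have "kap J 0 (frag_of mo) = frag_of mo"
      by (rule poly_mapping_eqI) (use True in \<open>auto simp: lookup_kap tmon_0 lookup_single when_def\<close>)
    ultimately show ?thesis by (simp add: subst_frag_of mono_Var)
  next
    case False
    then obtain i where i: "Poly_Mapping.lookup mo (Inr i) \<noteq> 0" unfolding inl_only_def by blast
    have "mval eps mo = 0" unfolding mval_def
      by (rule prod_zero) (use i in \<open>auto simp: in_keys_iff eps_def zero_power intro!: bexI[of _ "Inr i"]\<close>)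
    moreover have "kap J 0 (frag_of mo) = 0"
      by (rule poly_mapping_eqI) (use False in \<open>auto simp: lookup_kap tmon_0 lookup_single when_def\<close>)
    ultimately show ?thesis by (simp add: subst_frag_of)
  qed
next
  case (diff a b) then show ?case by (simp add: kap_diff subst_diff)
qed



lemma in_ideal3_elim:
  assumes "in_ideal V {a, b, c} q"
  shows "\<exists>c1 c2 c3. q = c1 * a + c2 * b + c3 * c"
proof -
  obtain co where q: "q = (\<Sum>g\<in>{a, b, c}. co g * g)" using assms unfolding in_ideal_def by blast
  consider "a = b" "c = a" | "a = b" "c \<noteq> a" | "a \<noteq> b" "c = a" | "a \<noteq> b" "c = b" | "a \<noteq> b" "c \<noteq> a" "c \<noteq> b"
    by blast
  then show ?thesis
  proof cases
    case 1
    then have "q = co a * a + 0 * b + 0 * c" using q by simp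
    then show ?thesis by blast
  next
    case 2
    then have "q = co a * a + 0 * b + co c * c" using q by simp
    then show ?thesis by blast
  next
    case 3
    then have "{a, b, c} = {a, b}" by auto
    then have "q = co a * a + co b * b + 0 * c" using q 3 by simp
    then show ?thesis by blast
  next
    case 4
    then have "{a, b, c} = {a, b}" by auto
    then have "q = co a * a + co b * b + 0 * c" using q 4 by simp
    then show ?thesis by blast
  next
    case 5
    then have "q = co a * a + co b * b + co c * c" using q by (simp add: add.assoc)
    then show ?thesis by blast
  qed
qed

lemma vars_zero: "vars (0::'a mpoly) = {}" by (simp add: vars_def)

lemma in_ideal2_intro:
  assumes "vars c1 \<subseteq> V" "vars c2 \<subseteq> V" "q = c1 * a + c2 * b"
  shows "in_ideal V {a, b} q"
proof (cases "a = b")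
  case True
  have "vars (c1 + c2) \<subseteq> V" using vars_add[of c1 c2] assms by blast
  then show ?thesis unfolding in_ideal_def using True assms(3)
    by (intro exI[of _ "\<lambda>_. c1 + c2"]) (simp add: algebra_simps)
next
  case False
  then show ?thesis unfolding in_ideal_def using assms
    by (intro exI[of _ "\<lambda>g. if g = a then c1 else c2"]) auto
qed

lemma prod_list_upt: "prod_list (map f [0..<n]) = (\<Prod>i<n. f i)"
  by (induction n) (simp_all add: mult.commute)

lemma lookup_ofnat_mult: "Poly_Mapping.lookup ((of_nat p :: 'a::comm_monoid_add \<Rightarrow>\<^sub>0 int) * P) k = int p * Poly_Mapping.lookup P k"
  using lookup_ofint_mult[of "int p" P k] by simp

lemma ofnat_cancel: "p > 0 \<Longrightarrow> (of_nat p :: 'a::comm_monoid_add \<Rightarrow>\<^sub>0 int) * a = of_nat p * b \<Longrightarrow> a = b"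
  by (rule poly_mapping_eqI) (metis lookup_ofnat_mult mult_cancel_left of_nat_eq_0_iff not_gr0)

lemma map_div_ofnat: "p > 0 \<Longrightarrow> Poly_Mapping.map (\<lambda>c. c div int p) ((of_nat p :: 'a::comm_monoid_add \<Rightarrow>\<^sub>0 int) * a) = a"
  by (rule poly_mapping_eqI) (simp add: Poly_Mapping.map.rep_eq lookup_ofnat_mult when_def)

lemma vars_Var: "vars (Var v) = {v}"
  by (simp add: vars_def Var_def)

lemma vars_ofnat: "vars (of_nat n :: 'a mpoly) = {}"
  by (auto simp: vars_def in_keys_iff lookup_of_nat when_def split: if_splits)

lemma inl_keys:
  assumes "vars G \<subseteq> range Inl" "mo \<in> Poly_Mapping.keys G" shows "inl_only mo"
  unfolding inl_only_def
proof
  fix i show "Poly_Mapping.lookup mo (Inr i) = 0"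
  proof (rule ccontr)
    assume "Poly_Mapping.lookup mo (Inr i) \<noteq> 0"
    then have "Inr i \<in> Poly_Mapping.keys mo" by (simp add: in_keys_iff)
    then have "Inr i \<in> vars G" using assms(2) unfolding vars_def by blast
    then show False using assms(1) by blast
  qed
qed

lemma vars_subst_xv: "vars (subst (\<lambda>i. xv i) q) \<subseteq> range Inl"
  by (rule vars_subst) (simp add: vars_Var)

lemma vars_xprod: "vars (\<Prod>i\<in>I. xv (f i)) \<subseteq> range Inl"
  by (rule vars_prod) (simp add: vars_Var)



definition sigpsi :: "nat \<Rightarrow> nat + nat \<Rightarrow> (nat + nat) mpoly" where
  "sigpsi m v = (case v of Inl i \<Rightarrow> if i \<le> m then 0 else xv i - yv i | Inr i \<Rightarrow> xv i)"

lemma psi_fy: "subst (sigpsi m) (subst (\<lambda>i. yv i) f) = subst (\<lambda>i. xv i) f"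
  by (simp add: subst_comp subst_Var sigpsi_def)

lemma theta_val: "subst eps (sigpsi m v) = (case v of Inl i \<Rightarrow> if i \<le> m then 0 else xv i | Inr i \<Rightarrow> xv i)"
  by (cases v) (simp_all add: sigpsi_def subst_diff subst_Var eps_def subst_0)

lemma subst_g0:
  assumes "g = (\<Sum>i\<le>m. c i * Var i)" "\<And>i. i \<le> m \<Longrightarrow> \<tau> i = 0"
  shows "subst \<tau> g = 0"
  unfolding assms(1) by (simp add: subst_sum subst_mult subst_Var assms(2))

lemma subst_fgh:
  assumes "f = g + of_nat p * h"
  shows "subst \<tau> f = subst \<tau> g + of_nat p * subst \<tau> h"
  unfolding assms by (simp add: subst_add subst_mult subst_of_nat)

lemma Tpow: "frag_of (tmon J 1) ^ n = frag_of (tmon J n)"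
proof (induction n)
  case 0 then show ?case by (simp add: tmon_0)
next
  case (Suc n) then show ?case using tmon_add[of J 1 n] by (simp add: mult_single)
qed

lemma yprod: "(\<Prod>i\<in>J. yv i) = frag_of (tmon J 1)"
  unfolding tmon_def Var_def by (simp add: prod_frag_of)



lemma eps_psi_r:
  assumes pr: "prime p"
    and g: "g = (\<Sum>i\<le>m. c i * Var i)"
    and h: "vars h \<subseteq> {m+1..d}"
    and f: "f = g + of_nat p * h"
  shows "subst eps (subst (sigpsi m) (phi p (subst (\<lambda>i. yv i) f - subst (\<lambda>i. xv i) f)))
         = phi p (subst (\<lambda>i. xv i) g)"
proof -
  have p0: "p > 0" using pr prime_gt_0_nat by blast
  define F where "F = subst (\<lambda>i. yv i) f - subst (\<lambda>i. xv i) f"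
  obtain cc where cc: "Lambda p F - F ^ p = of_nat p * cc" using frob[OF pr, of F] unfolding cp_def by blast
  have r: "phi p F = cc" unfolding phi_def cc by (rule map_div_ofnat[OF p0])
  define \<theta> where "\<theta> = (\<lambda>v. subst eps (sigpsi m v))"
  have th: "\<theta> v = (case v of Inl i \<Rightarrow> if i \<le> m then 0 else xv i | Inr i \<Rightarrow> xv i)" for v
    unfolding \<theta>_def by (rule theta_val)
  define \<zeta> where "\<zeta> = (\<lambda>i. if i \<le> m then 0 else xv i)"
  have hcong: "subst \<tau> h = subst \<tau>' h" if "\<And>i. m < i \<Longrightarrow> \<tau> i = \<tau>' i" for \<tau> \<tau>'
    by (rule subst_cong) (use h that in auto)
  have thF: "subst \<theta> F = subst (\<lambda>i. xv i) g"
  proof -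
    have 1: "subst \<theta> (subst (\<lambda>i. yv i) f) = subst (\<lambda>i. xv i) f"
      by (simp add: subst_comp subst_Var th)
    have "subst \<theta> (subst (\<lambda>i. xv i) f) = subst \<zeta> f"
      by (simp add: subst_comp subst_Var th \<zeta>_def)
    also have "\<dots> = of_nat p * subst (\<lambda>i. xv i) h"
      using subst_fgh[OF f, of \<zeta>] subst_g0[OF g, of \<zeta>] hcong[of \<zeta> "\<lambda>i. xv i"] by (simp add: \<zeta>_def)
    finally show ?thesis unfolding F_def subst_diff 1 using subst_fgh[OF f, of "\<lambda>i. xv i"] by simp
  qed
  have mu: "(\<lambda>v. subst \<theta> (Lv p v)) = (\<lambda>v. case v of Inl i \<Rightarrow> \<zeta> i ^ p | Inr i \<Rightarrow> xv i ^ p)"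
  proof
    fix v show "subst \<theta> (Lv p v) = (case v of Inl i \<Rightarrow> \<zeta> i ^ p | Inr i \<Rightarrow> xv i ^ p)"
      using p0 by (cases v) (auto simp: subst_power subst_add subst_diff subst_Var th \<zeta>_def zero_power)
  qed
  have thL: "subst \<theta> (Lambda p F) = subst (\<lambda>i. xv i ^ p) g"
  proof -
    have "subst \<theta> (Lambda p F) = subst (\<lambda>v. subst \<theta> (Lv p v)) F"
      unfolding Lambda_def by (rule subst_comp)
    also have "\<dots> = subst (\<lambda>i. xv i ^ p) f - subst (\<lambda>i. \<zeta> i ^ p) f"
      unfolding mu F_def by (simp add: subst_diff subst_comp subst_Var)
    also have "subst (\<lambda>i. \<zeta> i ^ p) f = of_nat p * subst (\<lambda>i. xv i ^ p) h"
      using subst_fgh[OF f, of "\<lambda>i. \<zeta> i ^ p"] subst_g0[OF g, of "\<lambda>i. \<zeta> i ^ p"] hcong[of "\<lambda>i. \<zeta> i ^ p" "\<lambda>i. xv i ^ p"] p0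
      by (simp add: \<zeta>_def zero_power)
    finally show ?thesis using subst_fgh[OF f, of "\<lambda>i. xv i ^ p"] by simp
  qed
  have LG: "Lambda p (subst (\<lambda>i. xv i) g) = subst (\<lambda>i. xv i ^ p) g"
    unfolding Lambda_def by (simp add: subst_comp subst_Var)
  have "of_nat p * subst \<theta> cc = subst \<theta> (of_nat p * cc)" by (simp add: subst_mult subst_of_nat)
  also have "\<dots> = Lambda p (subst (\<lambda>i. xv i) g) - (subst (\<lambda>i. xv i) g) ^ p"
    unfolding cc[symmetric] subst_diff subst_power thF thL LG ..
  finally have key: "Lambda p (subst (\<lambda>i. xv i) g) - (subst (\<lambda>i. xv i) g) ^ p = of_nat p * subst \<theta> cc" ..
  have "phi p (subst (\<lambda>i. xv i) g) = subst \<theta> cc"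
    unfolding phi_def key by (rule map_div_ofnat[OF p0])
  moreover have "subst eps (subst (sigpsi m) (phi p F)) = subst \<theta> cc"
    unfolding r \<theta>_def by (rule subst_comp)
  ultimately show ?thesis unfolding F_def by simp
qed



lemma kap_mult_vars: "finite J \<Longrightarrow> vars G \<subseteq> range Inl \<Longrightarrow> kap J K (G * q) = G * kap J K q"
  by (rule kap_mult_inl) (auto intro: inl_keys)

lemma vars_rho: "vars (subst (\<lambda>v. if v \<in> V then Var v else 0) q) \<subseteq> V"
  by (rule vars_subst) (simp add: vars_Var vars_zero)

theorem lemma8p3:
  fixes d m p :: nat and f g h :: "nat mpoly"
  assumes "prime p"
    and "m < d"
    and "vars f \<subseteq> {..d}"
    and "\<exists>c. (\<forall>i\<le>m. vars (c i) \<subseteq> {..d}) \<and> g = (\<Sum>i\<le>m. c i * Var i)"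
    and "vars h \<subseteq> {m+1..d}"
    and "f = g + of_nat p * h"
    and "\<not> cech_top_class_zero (Inl ` {..d}) {subst (\<lambda>i. xv i) f, of_nat p}
            (map xv [0..<m+1]) p (phi p (subst (\<lambda>i. xv i) g))"
  shows "\<not> cech_top_class_zero (Inl ` {..d} \<union> Inr ` {..d})
            {subst (\<lambda>i. xv i) f, subst (\<lambda>i. yv i) f, of_nat p}
            (map (\<lambda>i. yv i - xv i) [0..<d+1]) p
            (phi p (subst (\<lambda>i. yv i) f - subst (\<lambda>i. xv i) f))"
proof
  assume Hc: "cech_top_class_zero (Inl ` {..d} \<union> Inr ` {..d})
            {subst (\<lambda>i. xv i) f, subst (\<lambda>i. yv i) f, of_nat p}
            (map (\<lambda>i. yv i - xv i) [0..<d+1]) p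
            (phi p (subst (\<lambda>i. yv i) f - subst (\<lambda>i. xv i) f))"
  have pr: "prime p" by fact
  have p0: "p > 0" using pr prime_gt_0_nat by blast
  obtain cg where g: "g = (\<Sum>i\<le>m. cg i * Var i)" using assms(4) by blast
  have f: "f = g + of_nat p * h" by fact
  define fx where "fx = subst (\<lambda>i. xv i) f"
  define fy where "fy = subst (\<lambda>i. yv i) f"
  define gx where "gx = subst (\<lambda>i. xv i) g"
  define r where "r = phi p (fy - fx)"
  define J where "J = {m<..d}"
  define X where "X = (\<Prod>i<Suc m. xv i)"
  define T where "T = frag_of (tmon J 1)"
  define a where "a = (\<lambda>i. if i \<le> m then xv i else yv i)"
  have finJ: "finite J" unfolding J_def by simp
  have mJ: "Suc m \<in> J" unfolding J_def using assms(2) by auto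

  obtain s N ms where Q: "in_ideal (Inl ` {..d} \<union> Inr ` {..d}) {fx, fy, of_nat p}
     (prod_list (map (\<lambda>i. yv i - xv i) [0..<d+1]) ^ N *
       (r * prod_list (map (\<lambda>i. yv i - xv i) [0..<d+1]) ^ s -
        prod_list (map (\<lambda>i. yv i - xv i) [0..<d+1]) ^ p *
          (\<Sum>i<d+1. ms i * (map (\<lambda>i. yv i - xv i) [0..<d+1] ! i) ^ s)))"
    using Hc unfolding cech_top_class_zero_def Let_def fx_def fy_def r_def by auto
  have Aeq: "prod_list (map (\<lambda>i. yv i - xv i) [0..<d+1]) = (\<Prod>i<d+1. yv i - xv i)"
    by (rule prod_list_upt)
  have Seq: "(\<Sum>i<d+1. ms i * (map (\<lambda>i. yv i - xv i) [0..<d+1] ! i) ^ s) = (\<Sum>i<d+1. ms i * (yv i - xv i) ^ s)"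
    by (rule sum.cong) (simp_all del: upt_Suc)
  obtain c1 c2 c3 where Qeq: "(\<Prod>i<d+1. yv i - xv i) ^ N * (r * (\<Prod>i<d+1. yv i - xv i) ^ s
       - (\<Prod>i<d+1. yv i - xv i) ^ p * (\<Sum>i<d+1. ms i * (yv i - xv i) ^ s))
       = c1 * fx + c2 * fy + c3 * of_nat p"
    using in_ideal3_elim[OF Q] unfolding Aeq Seq by blast

  have psia: "subst (sigpsi m) (yv i - xv i) = a i" for i
    by (simp add: subst_diff subst_Var sigpsi_def a_def)
  have psia': "subst (sigpsi m) (yv i) - subst (sigpsi m) (xv i) = a i" for i
    using psia[of i] by (simp only: subst_diff)
  have psiA: "subst (sigpsi m) (\<Prod>i<d+1. yv i - xv i) = X * T"
  proof -
    have "subst (sigpsi m) (\<Prod>i<d+1. yv i - xv i) = (\<Prod>i<d+1. a i)"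
      by (simp only: subst_prod psia)
    also have "(\<Prod>i<d+1. a i) = (\<Prod>i<Suc m. a i) * (\<Prod>i\<in>J. a i)"
    proof -
      have "{..<d+1} = {..<Suc m} \<union> J" unfolding J_def using assms(2) by auto
      then have "(\<Prod>i<d+1. a i) = (\<Prod>i\<in>{..<Suc m} \<union> J. a i)" by simp
      also have "\<dots> = (\<Prod>i<Suc m. a i) * (\<Prod>i\<in>J. a i)"
        by (rule prod.union_disjoint) (auto simp: J_def finJ)
      finally show ?thesis .
    qed
    also have "(\<Prod>i<Suc m. a i) = X" unfolding X_def a_def by (rule prod.cong) auto
    also have "(\<Prod>i\<in>J. a i) = (\<Prod>i\<in>J. yv i)" unfolding a_def J_def by (rule prod.cong) auto
    also have "\<dots> = T" unfolding T_def by (rule yprod)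
    finally show ?thesis .
  qed
  have psify: "subst (sigpsi m) fy = fx" unfolding fy_def fx_def by (rule psi_fy)
  define H' where "H' = subst (\<lambda>i. sigpsi m (Inl i)) h"
  have psifx: "subst (sigpsi m) fx = of_nat p * H'"
  proof -
    have "subst (sigpsi m) fx = subst (\<lambda>i. sigpsi m (Inl i)) f"
      unfolding fx_def by (simp add: subst_comp subst_Var)
    also have "\<dots> = of_nat p * H'"
      using subst_fgh[OF f, of "\<lambda>i. sigpsi m (Inl i)"] subst_g0[OF g, of "\<lambda>i. sigpsi m (Inl i)"]
      by (simp add: sigpsi_def H'_def)
    finally show ?thesis .
  qed
  let ?\<psi> = "subst (sigpsi m)"
  have E1: "(X * T) ^ N * (?\<psi> r * (X * T) ^ s - (X * T) ^ p * (\<Sum>i<d+1. ?\<psi> (ms i) * a i ^ s))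
      = ?\<psi> c1 * (of_nat p * H') + ?\<psi> c2 * fx + ?\<psi> c3 * of_nat p"
    using arg_cong[OF Qeq, of ?\<psi>]
    by (simp only: subst_mult subst_diff subst_power subst_add subst_sum subst_of_nat psiA psia' psify psifx)
  have L1: "(X * T) ^ N * (?\<psi> r * (X * T) ^ s - (X * T) ^ p * (\<Sum>i<d+1. ?\<psi> (ms i) * a i ^ s))
      = X ^ (N + s) * (T ^ (N + s) * ?\<psi> r) - X ^ (N + p) * (\<Sum>i<d+1. T ^ (N + p) * a i ^ s * ?\<psi> (ms i))"
  proof -
    have 1: "(X * T) ^ N * (?\<psi> r * (X * T) ^ s) = X ^ (N + s) * (T ^ (N + s) * ?\<psi> r)"
      by (simp add: power_mult_distrib power_add mult_ac)
    have 2: "(X * T) ^ N * ((X * T) ^ p * S) = X ^ (N + p) * (T ^ (N + p) * S)" for S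
      by (simp add: power_mult_distrib power_add mult_ac)
    have 3: "T ^ (N + p) * (\<Sum>i<d+1. ?\<psi> (ms i) * a i ^ s) = (\<Sum>i<d+1. T ^ (N + p) * a i ^ s * ?\<psi> (ms i))"
      unfolding sum_distrib_left by (rule sum.cong) (simp_all add: mult_ac)
    show ?thesis unfolding right_diff_distrib 1 2 3 ..
  qed
  have R1: "?\<psi> c1 * (of_nat p * H') + ?\<psi> c2 * fx + ?\<psi> c3 * of_nat p
      = fx * ?\<psi> c2 + of_nat p * (?\<psi> c1 * H' + ?\<psi> c3)"
    by (simp add: algebra_simps)
  have E1': "X ^ (N + s) * (T ^ (N + s) * ?\<psi> r) - X ^ (N + p) * (\<Sum>i<d+1. T ^ (N + p) * a i ^ s * ?\<psi> (ms i))
      = fx * ?\<psi> c2 + of_nat p * (?\<psi> c1 * H' + ?\<psi> c3)"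
    using E1 L1 R1 by simp

  let ?\<kappa> = "kap J (N + s)"
  define M where "M = (\<lambda>i. if p \<le> s then kap J (s - p) (?\<psi> (ms i)) else 0)"
  have varsX: "vars (X ^ n) \<subseteq> range Inl" for n
    unfolding X_def by (rule vars_power, rule vars_xprod[of "\<lambda>i. i"])
  have varsxi: "vars (xv i ^ n) \<subseteq> range Inl" for i n
    by (rule vars_power) (simp add: vars_Var)
  have Tpw: "T ^ n = frag_of (tmon J n)" for n unfolding T_def by (rule Tpow)
  have termk: "?\<kappa> (T ^ (N + p) * a i ^ s * ?\<psi> (ms i)) = (if i < Suc m then xv i ^ s * M i else 0)"
    if "i < d + 1" for i
  proof (cases "i \<le> m")
    case True
    have "?\<kappa> (T ^ (N + p) * a i ^ s * ?\<psi> (ms i)) = ?\<kappa> (xv i ^ s * (frag_of (tmon J (N + p)) * ?\<psi> (ms i)))"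
      using True by (simp add: a_def Tpw mult_ac)
    also have "\<dots> = xv i ^ s * ?\<kappa> (frag_of (tmon J (N + p)) * ?\<psi> (ms i))"
      by (rule kap_mult_vars[OF finJ varsxi])
    also have "?\<kappa> (frag_of (tmon J (N + p)) * ?\<psi> (ms i)) = M i"
    proof (cases "p \<le> s")
      case True
      then have "?\<kappa> (frag_of (tmon J (N + p)) * ?\<psi> (ms i)) = kap J (N + s - (N + p)) (?\<psi> (ms i))"
        by (intro kap_shift finJ) simp
      then show ?thesis using True by (simp add: M_def)
    next
      case False
      have "?\<kappa> (frag_of (tmon J (N + p)) * ?\<psi> (ms i)) = 0"
        by (rule kap_vanish[OF finJ mJ]) (use False finJ mJ in \<open>simp add: lookup_tmon\<close>)
      then show ?thesis using False by (simp add: M_def)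
    qed
    finally show ?thesis using True by simp
  next
    case False
    then have iJ: "i \<in> J" using that unfolding J_def by auto
    have "T ^ (N + p) * a i ^ s * ?\<psi> (ms i) = frag_of (tmon J (N + p) + Poly_Mapping.single (Inr i) s) * ?\<psi> (ms i)"
      using False by (simp add: a_def Tpw Var_power mult_single)
    moreover have "?\<kappa> (frag_of (tmon J (N + p) + Poly_Mapping.single (Inr i) s) * ?\<psi> (ms i)) = 0"
      by (rule kap_vanish[OF finJ iJ]) (use p0 finJ iJ in \<open>simp add: lookup_tmon lookup_add\<close>)
    ultimately show ?thesis using False by simp
  qed
  have sumk: "?\<kappa> (\<Sum>i<d+1. T ^ (N + p) * a i ^ s * ?\<psi> (ms i)) = (\<Sum>i<Suc m. xv i ^ s * M i)"
  proof -
    have "?\<kappa> (\<Sum>i<d+1. T ^ (N + p) * a i ^ s * ?\<psi> (ms i)) = (\<Sum>i<d+1. if i < Suc m then xv i ^ s * M i else 0)"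
      unfolding kap_sum by (rule sum.cong) (simp_all add: termk)
    also have "\<dots> = (\<Sum>i<d+1. if i \<in> {..<Suc m} then xv i ^ s * M i else 0)"
      by (rule sum.cong) auto
    also have "\<dots> = (\<Sum>i\<in>{..<d+1} \<inter> {..<Suc m}. xv i ^ s * M i)"
      by (rule sum.inter_restrict[symmetric]) simp
    also have "{..<d+1} \<inter> {..<Suc m} = {..<Suc m}" using assms(2) by auto
    finally show ?thesis .
  qed
  have epsr: "subst eps (?\<psi> r) = phi p gx"
    unfolding r_def fx_def fy_def gx_def by (rule eps_psi_r[OF pr g assms(5) f])
  have k1: "?\<kappa> (X ^ (N + s) * (T ^ (N + s) * ?\<psi> r)) = X ^ (N + s) * phi p gx"
  proof -
    have "?\<kappa> (X ^ (N + s) * (T ^ (N + s) * ?\<psi> r)) = X ^ (N + s) * ?\<kappa> (frag_of (tmon J (N + s)) * ?\<psi> r)"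
      unfolding Tpw by (rule kap_mult_vars[OF finJ varsX])
    also have "?\<kappa> (frag_of (tmon J (N + s)) * ?\<psi> r) = kap J 0 (?\<psi> r)"
      using kap_shift[OF finJ, of "N + s" "N + s"] by simp
    also have "\<dots> = phi p gx" by (simp add: kap0_eps epsr)
    finally show ?thesis .
  qed
  have varsfx: "vars fx \<subseteq> range Inl" unfolding fx_def by (rule vars_subst_xv)
  have varsp: "vars (of_nat p :: (nat + nat) mpoly) \<subseteq> range Inl" by (simp add: vars_ofnat)
  define C2 where "C2 = ?\<kappa> (?\<psi> c2)"
  define C3 where "C3 = ?\<kappa> (?\<psi> c1 * H') + ?\<kappa> (?\<psi> c3)"
  have k1': "X ^ (N + s) * ?\<kappa> (T ^ (N + s) * ?\<psi> r) = X ^ (N + s) * phi p gx"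
    using k1 unfolding kap_mult_vars[OF finJ varsX] .
  have E2: "X ^ (N + s) * phi p gx - X ^ (N + p) * (\<Sum>i<Suc m. xv i ^ s * M i) = fx * C2 + of_nat p * C3"
  proof -
    have "?\<kappa> (X ^ (N + s) * (T ^ (N + s) * ?\<psi> r) - X ^ (N + p) * (\<Sum>i<d+1. T ^ (N + p) * a i ^ s * ?\<psi> (ms i)))
       = ?\<kappa> (fx * ?\<psi> c2 + of_nat p * (?\<psi> c1 * H' + ?\<psi> c3))" using E1' by simp
    then show ?thesis
      unfolding kap_diff kap_add kap_mult_vars[OF finJ varsX] k1' sumk kap_mult_vars[OF finJ varsfx]
        kap_mult_vars[OF finJ varsp] C2_def C3_def .
  qed

  define \<rho> :: "(nat + nat) mpoly \<Rightarrow> (nat + nat) mpoly"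
    where "\<rho> = subst (\<lambda>v. if v \<in> Inl ` {..d} then Var v else 0)"
  have rxi: "\<rho> (xv i) = xv i" if "i \<le> d" for i using that by (simp add: \<rho>_def subst_Var)
  have rX: "\<rho> X = X" unfolding X_def \<rho>_def subst_prod
    by (rule prod.cong) (use assms(2) in \<open>auto simp: subst_Var\<close>)
  have rp: "\<rho> (of_nat p) = of_nat p" by (simp add: \<rho>_def subst_of_nat)
  have fcong: "subst \<tau> f = subst \<tau>' f" if "\<And>i. i \<le> d \<Longrightarrow> \<tau> i = \<tau>' i" for \<tau> \<tau>'
    by (rule subst_cong) (use assms(3) that in auto)
  have hcong: "subst \<tau> h = subst \<tau>' h" if "\<And>i. i \<le> d \<Longrightarrow> \<tau> i = \<tau>' i" for \<tau> \<tau>'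
    by (rule subst_cong) (use assms(5) that in auto)
  have gcong: "subst \<tau> g = subst \<tau>' g" if "\<And>i. i \<le> d \<Longrightarrow> \<tau> i = \<tau>' i" for \<tau> \<tau>'
    using subst_fgh[OF f, of \<tau>] subst_fgh[OF f, of \<tau>'] fcong[OF that] hcong[OF that] by simp
  have rfx: "\<rho> fx = fx" unfolding \<rho>_def fx_def
    by (simp add: subst_comp subst_Var) (rule fcong, simp)
  obtain cc where cc: "Lambda p gx - gx ^ p = of_nat p * cc" using frob[OF pr, of gx] unfolding cp_def by blast
  have phic: "phi p gx = cc" unfolding phi_def cc by (rule map_div_ofnat[OF p0])
  have LG: "Lambda p gx = subst (\<lambda>i. xv i ^ p) g"
    unfolding Lambda_def gx_def by (simp add: subst_comp subst_Var)
  have rphi: "\<rho> (phi p gx) = phi p gx"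
  proof -
    have "\<rho> (Lambda p gx - gx ^ p) = Lambda p gx - gx ^ p"
    proof -
      have a1: "\<rho> (subst (\<lambda>i. xv i ^ p) g) = subst (\<lambda>i. xv i ^ p) g"
        unfolding \<rho>_def by (simp add: subst_comp subst_Var subst_power) (rule gcong, simp)
      have a2: "\<rho> gx = gx"
        unfolding \<rho>_def gx_def by (simp add: subst_comp subst_Var) (rule gcong, simp)
      have "\<rho> (subst (\<lambda>i. xv i ^ p) g - gx ^ p) = \<rho> (subst (\<lambda>i. xv i ^ p) g) - (\<rho> gx) ^ p"
        by (simp only: \<rho>_def subst_diff subst_power)
      then show ?thesis unfolding LG a1 a2 .
    qed
    then have "of_nat p * \<rho> cc = of_nat p * cc" unfolding cc \<rho>_def by (simp add: subst_mult subst_of_nat)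
    then show ?thesis unfolding phic by (rule ofnat_cancel[OF p0])
  qed
  have E3: "X ^ (N + s) * phi p gx - X ^ (N + p) * (\<Sum>i<Suc m. xv i ^ s * \<rho> (M i)) = fx * \<rho> C2 + of_nat p * \<rho> C3"
  proof -
    have "\<rho> (X ^ (N + s) * phi p gx - X ^ (N + p) * (\<Sum>i<Suc m. xv i ^ s * M i)) = \<rho> (fx * C2 + of_nat p * C3)"
      using E2 by simp
    moreover have "(\<Sum>i<Suc m. \<rho> (xv i ^ s * M i)) = (\<Sum>i<Suc m. xv i ^ s * \<rho> (M i))"
      by (rule sum.cong) (use assms(2) in \<open>simp_all add: \<rho>_def subst_mult subst_power subst_Var\<close>)
    moreover have "\<rho> (a * b) = \<rho> a * \<rho> b" "\<rho> (a - b) = \<rho> a - \<rho> b" "\<rho> (a + b) = \<rho> a + \<rho> b"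
      "\<rho> (a ^ n) = \<rho> a ^ n" for a b n
      by (simp_all only: \<rho>_def subst_mult subst_diff subst_add subst_power)
    moreover have "\<rho> (\<Sum>i<Suc m. xv i ^ s * M i) = (\<Sum>i<Suc m. \<rho> (xv i ^ s * M i))"
      by (simp only: \<rho>_def subst_sum)
    ultimately show ?thesis by (simp only: rX rphi rfx rp)
  qed
  have "cech_top_class_zero (Inl ` {..d}) {fx, of_nat p} (map xv [0..<m+1]) p (phi p gx)"
    unfolding cech_top_class_zero_def Let_def
  proof (intro exI conjI allI impI)
    show "vars (\<rho> (M i)) \<subseteq> Inl ` {..d}" for i unfolding \<rho>_def by (rule vars_rho)
    have PX: "prod_list (map xv [0..<m+1]) = X" unfolding X_def using prod_list_upt[of xv "m+1"] by simp
    have S2: "(\<Sum>i<length (map xv [0..<m+1]). \<rho> (M i) * (map xv [0..<m+1] ! i) ^ s)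
             = (\<Sum>i<Suc m. xv i ^ s * \<rho> (M i))"
      by (rule sum.cong) (auto simp: mult.commute simp del: upt_Suc)
    show "in_ideal (Inl ` {..d}) {fx, of_nat p}
        (prod_list (map xv [0..<m+1]) ^ N * (phi p gx * prod_list (map xv [0..<m+1]) ^ s -
          prod_list (map xv [0..<m+1]) ^ p * (\<Sum>i<length (map xv [0..<m+1]). \<rho> (M i) * (map xv [0..<m+1] ! i) ^ s)))"
      unfolding PX S2
    proof (rule in_ideal2_intro)
      show "vars (\<rho> C2) \<subseteq> Inl ` {..d}" unfolding \<rho>_def by (rule vars_rho)
      show "vars (\<rho> C3) \<subseteq> Inl ` {..d}" unfolding \<rho>_def by (rule vars_rho)
      show "X ^ N * (phi p gx * X ^ s - X ^ p * (\<Sum>i<Suc m. xv i ^ s * \<rho> (M i))) = \<rho> C2 * fx + \<rho> C3 * of_nat p"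
        using E3 by (simp add: power_add right_diff_distrib mult_ac)
    qed
  qed
  then show False using assms(7) unfolding fx_def gx_def by simp
qed

end
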